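(* Let $\mathbb{k}$ be a field of characteristic $0$ containing a primitive $n$-th root of unity $\omega$, let $H=T_{n^2}(\omega)$ be the Taft Hopf algebra and $A=A_n(\omega)=\mathbb{k}[z]/(z^n-\omega)=\mathbb{k}[u]$, with $u$ the image of $z$. Equip $A$ with the left $H$-module algebra structure determined by $g\cdot u=\omega u$, $x\cdot u=1$, and the left $H$-comodule algebra structure $\rho:A\to H\otimes A$ determined by $\rho(u)=\sum_{i=0}^{n-1}a_i\,x^ig^{-(i+1)}\otimes u^{i+1}$ with $a_i=(\omega-1)^i\omega^{i(i+1)/2}$. Then, for any $n$, $A$ is commutative in the braided category ${}^H_H\mathcal{YD}$, i.e. for all $a,b\in A$, $$ab=\sum (a_{-1}\cdot b)\,a_0,$$ where $\rho(a)=\sum a_{-1}\otimes a_0$.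
   Context: The Taft Hopf algebra is $H=T_{n^2}(\omega)=\mathbb{k}\langle x,g\mid x^n=0,\ g^n=1,\ xg=\omega gx\rangle$ with $\Delta(g)=g\otimes g$, $\Delta(x)=x\otimes 1+g\otimes x$, $\epsilon(g)=1$, $\epsilon(x)=0$. ${}^H_H\mathcal{YD}$ is the category of left-left Yetter–Drinfeld modules over $H$, braided by $\tau(m\otimes n)=\sum(m_{-1}\cdot n)\otimes m_0$; an algebra $A$ in this category is commutative in it if $m_A=m_A\circ\tau$. Module algebra means $h\cdot(ab)=\sum(h_1\cdot a)(h_2\cdot b)$, $h\cdot1=\epsilon(h)1$; comodule algebra means $\rho$ is an algebra map with $(\mathrm{id}\otimes\rho)\rho=(\Delta\otimes\mathrm{id})\rho$. *)

theory Defs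
  imports Main
begin

text \<open>Elements of A = k[u], u^n = omega, are coefficient functions nat => k (coefficient of u^m, m < n).
  Elements of H = T_{n^2}(omega) are coefficient functions nat => nat => k
  (coefficient of the PBW basis element g^i x^j, i, j < n).
  Elements of H (x) A are coefficient functions nat => nat => nat => k
  (coefficient of g^i x^j (x) u^m).\<close>

definition primitive_root_of_unity :: "nat \<Rightarrow> 'k::field \<Rightarrow> bool" where
  "primitive_root_of_unity n \<omega> \<longleftrightarrow> \<omega> ^ n = 1 \<and> (\<forall>k. 0 < k \<and> k < n \<longrightarrow> \<omega> ^ k \<noteq> 1)"

definition uA :: "nat \<Rightarrow> nat \<Rightarrow> 'k::field" where
  "uA k = (\<lambda>m. if m = k then 1 else 0)"

text \<open>Multiplication in A = k[z]/(z^n - omega): u^i u^j = u^(i+j) if i+j<n, = omega u^(i+j-n) otherwise.\<close>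
definition mulA :: "nat \<Rightarrow> 'k::field \<Rightarrow> (nat \<Rightarrow> 'k) \<Rightarrow> (nat \<Rightarrow> 'k) \<Rightarrow> nat \<Rightarrow> 'k" where
  "mulA n \<omega> a b = (\<lambda>m. \<Sum>i<n. \<Sum>j<n.
      if (i + j) mod n = m then a i * b j * (if n \<le> i + j then \<omega> else 1) else 0)"

definition powA :: "nat \<Rightarrow> 'k::field \<Rightarrow> (nat \<Rightarrow> 'k) \<Rightarrow> nat \<Rightarrow> nat \<Rightarrow> 'k" where
  "powA n \<omega> a k = (mulA n \<omega> a ^^ k) (uA 0)"

text \<open>The action of g: algebra automorphism with g.u = omega u, so g.(u^k) = (g.u)^k, extended linearly.\<close>
definition gact :: "nat \<Rightarrow> 'k::field \<Rightarrow> (nat \<Rightarrow> 'k) \<Rightarrow> nat \<Rightarrow> 'k" where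
  "gact n \<omega> a = (\<lambda>m. \<Sum>k<n. a k * powA n \<omega> (\<lambda>l. \<omega> * uA 1 l) k m)"

text \<open>The action of x on the basis u^k, determined by x.1 = 0, x.u = 1 and the module algebra
  rule x.(u u^k) = (x.u) u^k + (g.u)(x.u^k) (since Delta x = x (x) 1 + g (x) x).\<close>
fun xbasis :: "nat \<Rightarrow> 'k::field \<Rightarrow> nat \<Rightarrow> nat \<Rightarrow> 'k" where
  "xbasis n \<omega> 0 = (\<lambda>m. 0)"
| "xbasis n \<omega> (Suc k) = (\<lambda>m. mulA n \<omega> (uA 0) (powA n \<omega> (uA 1) k) m
                          + mulA n \<omega> (\<lambda>l. \<omega> * uA 1 l) (xbasis n \<omega> k) m)"

definition xact :: "nat \<Rightarrow> 'k::field \<Rightarrow> (nat \<Rightarrow> 'k) \<Rightarrow> nat \<Rightarrow> 'k" where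
  "xact n \<omega> a = (\<lambda>m. \<Sum>k<n. a k * xbasis n \<omega> k m)"

definition actH :: "nat \<Rightarrow> 'k::field \<Rightarrow> (nat \<Rightarrow> nat \<Rightarrow> 'k) \<Rightarrow> (nat \<Rightarrow> 'k) \<Rightarrow> nat \<Rightarrow> 'k" where
  "actH n \<omega> h a = (\<lambda>m. \<Sum>i<n. \<Sum>j<n. h i j * ((gact n \<omega> ^^ i) ((xact n \<omega> ^^ j) a)) m)"

definition basisH :: "nat \<Rightarrow> nat \<Rightarrow> nat \<Rightarrow> nat \<Rightarrow> 'k::field" where
  "basisH c e = (\<lambda>i j. if i = c \<and> j = e then 1 else 0)"

text \<open>Multiplication in H: (g^a x^b)(g^c x^d) = omega^(bc) g^(a+c mod n) x^(b+d), with x^(b+d) = 0 if b+d >= n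
  (from x g = omega g x, g^n = 1, x^n = 0).\<close>
definition mulH :: "nat \<Rightarrow> 'k::field \<Rightarrow> (nat \<Rightarrow> nat \<Rightarrow> 'k) \<Rightarrow> (nat \<Rightarrow> nat \<Rightarrow> 'k) \<Rightarrow> nat \<Rightarrow> nat \<Rightarrow> 'k" where
  "mulH n \<omega> h h' = (\<lambda>c e. \<Sum>a<n. \<Sum>b<n. \<Sum>c'<n. \<Sum>d<n.
      if (a + c') mod n = c \<and> b + d = e \<and> e < n then h a b * h' c' d * \<omega> ^ (b * c') else 0)"

definition mulHA :: "nat \<Rightarrow> 'k::field \<Rightarrow> (nat \<Rightarrow> nat \<Rightarrow> nat \<Rightarrow> 'k) \<Rightarrow> (nat \<Rightarrow> nat \<Rightarrow> nat \<Rightarrow> 'k)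
    \<Rightarrow> nat \<Rightarrow> nat \<Rightarrow> nat \<Rightarrow> 'k" where
  "mulHA n \<omega> t t' = (\<lambda>c e m. \<Sum>a<n. \<Sum>b<n. \<Sum>k<n. \<Sum>c'<n. \<Sum>d<n. \<Sum>k'<n.
      if (a + c') mod n = c \<and> b + d = e \<and> e < n \<and> (k + k') mod n = m
      then t a b k * t' c' d k' * \<omega> ^ (b * c') * (if n \<le> k + k' then \<omega> else 1) else 0)"

definition unitHA :: "nat \<Rightarrow> nat \<Rightarrow> nat \<Rightarrow> 'k::field" where
  "unitHA = (\<lambda>i j k. if i = 0 \<and> j = 0 \<and> k = 0 then 1 else 0)"

definition tensorHA :: "(nat \<Rightarrow> nat \<Rightarrow> 'k::field) \<Rightarrow> (nat \<Rightarrow> 'k) \<Rightarrow> nat \<Rightarrow> nat \<Rightarrow> nat \<Rightarrow> 'k" where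
  "tensorHA h a = (\<lambda>i j k. h i j * a k)"

definition xpowH :: "nat \<Rightarrow> nat \<Rightarrow> nat \<Rightarrow> nat \<Rightarrow> 'k::field" where
  "xpowH n i = (\<lambda>a b. if a = 0 \<and> b = i \<and> i < n then 1 else 0)"

definition gpowH :: "nat \<Rightarrow> nat \<Rightarrow> nat \<Rightarrow> nat \<Rightarrow> 'k::field" where
  "gpowH n m = (\<lambda>a b. if a = m mod n \<and> b = 0 then 1 else 0)"

definition taft_coef :: "'k::field \<Rightarrow> nat \<Rightarrow> 'k" where
  "taft_coef \<omega> i = (\<omega> - 1) ^ i * \<omega> ^ (i * (i + 1) div 2)"

text \<open>rho(u) = sum_{i<n} a_i x^i g^{-(i+1)} (x) u^(i+1); note g^{-(i+1)} = g^(n-(i+1)) as g^n = 1.\<close>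
definition rho_u :: "nat \<Rightarrow> 'k::field \<Rightarrow> nat \<Rightarrow> nat \<Rightarrow> nat \<Rightarrow> 'k" where
  "rho_u n \<omega> = (\<lambda>c e m. \<Sum>i<n. taft_coef \<omega> i *
      tensorHA (mulH n \<omega> (xpowH n i) (gpowH n (n - (i + 1)))) (powA n \<omega> (uA 1) (i + 1)) c e m)"

text \<open>The coaction: an algebra map, so rho(u^k) = rho(u)^k, extended linearly.\<close>
definition rhoA :: "nat \<Rightarrow> 'k::field \<Rightarrow> (nat \<Rightarrow> 'k) \<Rightarrow> nat \<Rightarrow> nat \<Rightarrow> nat \<Rightarrow> 'k" where
  "rhoA n \<omega> a = (\<lambda>c e m. \<Sum>k<n. a k * ((mulHA n \<omega> (rho_u n \<omega>) ^^ k) unitHA) c e m)"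

end

theory Submission
  imports Defs
begin

declare One_nat_def [simp del]

definition Mc :: "nat \<Rightarrow> 'k::field \<Rightarrow> nat \<Rightarrow> nat \<Rightarrow> nat \<Rightarrow> 'k" where
  "Mc n \<omega> i j m = (if (i + j) mod n = m then \<omega> ^ ((i + j) div n) else 0)"

lemma mulA_Mc:
  assumes "0 < n"
  shows "mulA n \<omega> a b = (\<lambda>m. \<Sum>i<n. \<Sum>j<n. a i * b j * Mc n \<omega> i j m)"
proof -
  have "(if n \<le> i + j then \<omega> else 1) = \<omega> ^ ((i + j) div n)" if "i < n" "j < n" for i j
  proof (cases "n \<le> i + j")
    case True
    then have "(i + j) div n = 1" using that
      using assms by (simp add: le_div_geq div_less)
    then show ?thesis using True by simp
  next
    case False then show ?thesis by simp
  qed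
  then show ?thesis unfolding mulA_def Mc_def
    by (intro ext sum.cong refl) auto
qed

lemma sum_Mc_left:
  assumes "0 < n"
  shows "(\<Sum>j<n. Mc n \<omega> i k j * F j) = \<omega> ^ ((i + k) div n) * F ((i + k) mod n)"
proof -
  have "(\<Sum>j<n. Mc n \<omega> i k j * F j) = (\<Sum>j<n. if j = (i + k) mod n then \<omega> ^ ((i + k) div n) * F j else 0)"
    unfolding Mc_def by (intro sum.cong) auto
  also have "\<dots> = \<omega> ^ ((i + k) div n) * F ((i + k) mod n)"
    using assms by (simp add: sum.delta')
  finally show ?thesis .
qed

lemma mv1: "(\<Sum>x\<in>A. \<Sum>y\<in>B. f x y) = (\<Sum>y\<in>B. \<Sum>x\<in>A. f x y)"
  by (rule sum.swap)
lemma mv2: "(\<Sum>x\<in>A. \<Sum>y\<in>B. \<Sum>z\<in>C. f x y z) = (\<Sum>y\<in>B. \<Sum>z\<in>C. \<Sum>x\<in>A. f x y z)"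
  by (subst sum.swap) (rule sum.cong[OF refl], rule sum.swap)
lemma mv3: "(\<Sum>x\<in>A. \<Sum>y\<in>B. \<Sum>z\<in>C. \<Sum>w\<in>D. f x y z w) = (\<Sum>y\<in>B. \<Sum>z\<in>C. \<Sum>w\<in>D. \<Sum>x\<in>A. f x y z w)"
  by (subst sum.swap) (rule sum.cong[OF refl], rule mv2)
lemma mv4: "(\<Sum>x\<in>A. \<Sum>y\<in>B. \<Sum>z\<in>C. \<Sum>w\<in>D. \<Sum>v\<in>E. f x y z w v) = (\<Sum>y\<in>B. \<Sum>z\<in>C. \<Sum>w\<in>D. \<Sum>v\<in>E. \<Sum>x\<in>A. f x y z w v)"
  by (subst sum.swap) (rule sum.cong[OF refl], rule mv3)
lemma mv5: "(\<Sum>x\<in>A. \<Sum>y\<in>B. \<Sum>z\<in>C. \<Sum>w\<in>D. \<Sum>v\<in>E. \<Sum>u\<in>F. f x y z w v u) = (\<Sum>y\<in>B. \<Sum>z\<in>C. \<Sum>w\<in>D. \<Sum>v\<in>E. \<Sum>u\<in>F. \<Sum>x\<in>A. f x y z w v u)"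
  by (subst sum.swap) (rule sum.cong[OF refl], rule mv4)
lemma mv6: "(\<Sum>x\<in>A. \<Sum>y\<in>B. \<Sum>z\<in>C. \<Sum>w\<in>D. \<Sum>v\<in>E. \<Sum>u\<in>F. \<Sum>t\<in>G. f x y z w v u t) = (\<Sum>y\<in>B. \<Sum>z\<in>C. \<Sum>w\<in>D. \<Sum>v\<in>E. \<Sum>u\<in>F. \<Sum>t\<in>G. \<Sum>x\<in>A. f x y z w v u t)"
  by (subst sum.swap) (rule sum.cong[OF refl], rule mv5)

lemma Mc_assoc:
  assumes "0 < n"
  shows "(\<Sum>j<n. Mc n \<omega> i k j * Mc n \<omega> j l m) = Mc n \<omega> (i + k) l m"
proof -
  have d: "(i + k + l) div n = (i + k) div n + ((i + k) mod n + l) div n"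
  proof -
    have e: "i + k + l = ((i + k) mod n + l) + n * ((i + k) div n)" by simp
    have "n \<noteq> 0" using assms by simp
    note q = div_mult_self2[OF this, of "(i + k) mod n + l" "(i + k) div n"]
    show ?thesis by (subst e) (use q in linarith)
  qed
  have md: "((i + k) mod n + l) mod n = (i + k + l) mod n"
    by (simp add: mod_add_left_eq)
  show ?thesis
    by (subst sum_Mc_left[OF assms]) (simp add: Mc_def d md power_add)
qed

lemma Mc_comm: "Mc n \<omega> i j m = Mc n \<omega> j i m"
  by (simp add: Mc_def add.commute)

lemma Mc_assoc2:
  assumes "0 < n"
  shows "(\<Sum>j<n. Mc n \<omega> k l j * Mc n \<omega> i j m) = Mc n \<omega> (i + k) l m"
proof -
  have "(\<Sum>j<n. Mc n \<omega> k l j * Mc n \<omega> i j m) = (\<Sum>j<n. Mc n \<omega> k l j * Mc n \<omega> j i m)"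
    by (simp add: Mc_comm)
  also have "\<dots> = Mc n \<omega> (k + l) i m" by (rule Mc_assoc[OF assms])
  also have "\<dots> = Mc n \<omega> (i + k) l m" by (simp add: Mc_def ac_simps)
  finally show ?thesis .
qed

lemma mulA_assoc:
  assumes "0 < n"
  shows "mulA n \<omega> (mulA n \<omega> a b) c = mulA n \<omega> a (mulA n \<omega> b c)"
proof
  fix m
  have "mulA n \<omega> (mulA n \<omega> a b) c m
      = (\<Sum>j<n. \<Sum>l<n. \<Sum>i<n. \<Sum>k<n. a i * b k * c l * (Mc n \<omega> i k j * Mc n \<omega> j l m))"
    unfolding mulA_Mc[OF assms] sum_distrib_right sum_distrib_left
    by (intro sum.cong refl) (simp add: mult_ac)
  also have "\<dots> = (\<Sum>i<n. \<Sum>k<n. \<Sum>l<n. \<Sum>j<n. a i * b k * c l * (Mc n \<omega> i k j * Mc n \<omega> j l m))"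
    by (subst mv3) (subst mv2, rule refl)
  also have "\<dots> = (\<Sum>i<n. \<Sum>k<n. \<Sum>l<n. a i * b k * c l * Mc n \<omega> (i + k) l m)"
    using assms by (simp add: sum_distrib_left[symmetric] Mc_assoc)
  finally have L: "mulA n \<omega> (mulA n \<omega> a b) c m = \<dots>" .
  have "mulA n \<omega> a (mulA n \<omega> b c) m
      = (\<Sum>i<n. \<Sum>j<n. \<Sum>k<n. \<Sum>l<n. a i * b k * c l * (Mc n \<omega> k l j * Mc n \<omega> i j m))"
    unfolding mulA_Mc[OF assms] sum_distrib_right sum_distrib_left
    by (intro sum.cong refl) (simp add: mult_ac)
  also have "\<dots> = (\<Sum>i<n. \<Sum>k<n. \<Sum>l<n. \<Sum>j<n. a i * b k * c l * (Mc n \<omega> k l j * Mc n \<omega> i j m))"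
    by (rule sum.cong[OF refl], subst mv2, rule refl)
  also have "\<dots> = (\<Sum>i<n. \<Sum>k<n. \<Sum>l<n. a i * b k * c l * Mc n \<omega> (i + k) l m)"
    using assms by (simp add: sum_distrib_left[symmetric] Mc_assoc2)
  finally show "mulA n \<omega> (mulA n \<omega> a b) c m = mulA n \<omega> a (mulA n \<omega> b c) m" using L by simp
qed

definition supp :: "nat \<Rightarrow> (nat \<Rightarrow> 'k::field) \<Rightarrow> bool" where
  "supp n f \<longleftrightarrow> (\<forall>k\<ge>n. f k = 0)"

lemma Mc_shift:
  assumes "0 < n"
  shows "\<omega> ^ (x div n) * Mc n \<omega> (x mod n) l m = Mc n \<omega> (x + l) 0 m"
proof -
  have d: "(x + l) div n = x div n + (x mod n + l) div n"
  proof -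
    have e: "x + l = (x mod n + l) + n * (x div n)" by simp
    have "n \<noteq> 0" using assms by simp
    note q = div_mult_self2[OF this, of "x mod n + l" "x div n"]
    show ?thesis by (subst e) (use q in linarith)
  qed
  have md: "(x mod n + l) mod n = (x + l) mod n"
    by (simp add: mod_add_left_eq)
  show ?thesis by (simp add: Mc_def d md power_add)
qed

lemma mulA_supp:
  assumes "0 < n" shows "supp n (mulA n \<omega> a b)"
  unfolding supp_def mulA_def
proof (intro allI impI sum.neutral ballI)
  fix k i j assume "n \<le> k"
  then show "(if (i + j) mod n = k then a i * b j * (if n \<le> i + j then \<omega> else 1) else 0) = 0"
    using mod_less_divisor[OF assms, of "i + j"] by auto
qed

lemma sum_if_const [simp]: "(\<Sum>j\<in>A. if P then f j else 0) = (if P then (\<Sum>j\<in>A. f j) else 0)"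
  by simp

lemma if0_mult [simp]: "(if P then x else (0::'a::semiring_1)) * y = (if P then x * y else 0)"
  by simp
lemma mult_if0 [simp]: "y * (if P then x else (0::'a::semiring_1)) = (if P then y * x else 0)"
  by simp

lemma mulA_uA_left:
  assumes "0 < n" "i < n"
  shows "mulA n \<omega> (uA i) b = (\<lambda>m. \<Sum>j<n. b j * Mc n \<omega> i j m)"
  unfolding mulA_Mc[OF assms(1)] uA_def using assms(2)
  by (simp add: if_distrib[of "\<lambda>x. x * _"] sum.delta cong: if_cong)

lemma mulA_uA_right:
  assumes "0 < n" "k < n"
  shows "mulA n \<omega> b (uA k) = (\<lambda>m. \<Sum>i<n. b i * Mc n \<omega> i k m)"
  unfolding mulA_Mc[OF assms(1)] uA_def using assms(2)
  by (simp add: if_distrib[of "\<lambda>x. x * _"] sum.delta cong: if_cong)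

lemma Mc0: "j < n \<Longrightarrow> Mc n \<omega> 0 j m = (if j = m then 1 else 0)"
  by (simp add: Mc_def)

lemma mulA_unit_left:
  assumes "0 < n" "supp n b"
  shows "mulA n \<omega> (uA 0) b = b"
proof
  fix m
  have "mulA n \<omega> (uA 0) b m = (\<Sum>j<n. if j = m then b j else 0)"
    using assms by (simp add: mulA_uA_left Mc0)
  also have "\<dots> = b m" using assms by (simp add: supp_def)
  finally show "mulA n \<omega> (uA 0) b m = b m" .
qed

lemma mulA_comm: "mulA n \<omega> a b = mulA n \<omega> b a"
  unfolding mulA_def by (subst sum.swap) (intro ext sum.cong refl, simp add: ac_simps)

lemma mulA_unit_right:
  assumes "0 < n" "supp n b"
  shows "mulA n \<omega> b (uA 0) = b"
  using mulA_unit_left[OF assms] by (simp add: mulA_comm)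

lemma mulA_smult_left: "mulA n \<omega> (\<lambda>l. c * f l) g = (\<lambda>m. c * mulA n \<omega> f g m)"
  unfolding mulA_def sum_distrib_left by (intro ext sum.cong refl) (auto simp: mult_ac)

lemma mulA_smult_right: "mulA n \<omega> g (\<lambda>l. c * f l) = (\<lambda>m. c * mulA n \<omega> g f m)"
  using mulA_smult_left by (metis mulA_comm)

lemma powA_u1:
  assumes "2 \<le> n"
  shows "powA n \<omega> (uA 1) k = (\<lambda>m. if m = k mod n then \<omega> ^ (k div n) else 0)"
proof (induction k)
  case 0
  then show ?case using assms by (simp add: powA_def uA_def fun_eq_iff)
next
  case (Suc k)
  have n0: "0 < n" using assms by simp
  have "powA n \<omega> (uA 1) (Suc k) = mulA n \<omega> (uA 1) (powA n \<omega> (uA 1) k)"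
    by (simp add: powA_def)
  also have "\<dots> = (\<lambda>m. \<Sum>j<n. (if j = k mod n then \<omega> ^ (k div n) else 0) * Mc n \<omega> 1 j m)"
    using assms Suc by (simp add: mulA_uA_left)
  also have "\<dots> = (\<lambda>m. \<omega> ^ (k div n) * Mc n \<omega> (k mod n) 1 m)"
    using n0 by (simp add: Mc_comm[of n \<omega> _ 1])
  also have "\<dots> = (\<lambda>m. Mc n \<omega> (Suc k) 0 m)"
    using Mc_shift[OF n0, of \<omega> k 1] by (simp add: Suc_eq_plus1)
  also have "\<dots> = (\<lambda>m. if m = Suc k mod n then \<omega> ^ (Suc k div n) else 0)"
    by (auto simp: Mc_def)
  finally show ?case .
qed

lemma powA_u1_lt: "2 \<le> n \<Longrightarrow> k < n \<Longrightarrow> powA n \<omega> (uA 1) k = uA k"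
  using powA_u1[of n \<omega> k] by (auto simp: uA_def fun_eq_iff)

lemma powA_w:
  "powA n \<omega> (\<lambda>l. \<omega> * uA 1 l) k = (\<lambda>m. \<omega> ^ k * powA n \<omega> (uA 1) k m)"
proof (induction k)
  case 0 then show ?case by (simp add: powA_def)
next
  case (Suc k)
  have "powA n \<omega> (\<lambda>l. \<omega> * uA 1 l) (Suc k) = mulA n \<omega> (\<lambda>l. \<omega> * uA 1 l) (powA n \<omega> (\<lambda>l. \<omega> * uA 1 l) k)"
    by (simp add: powA_def)
  also have "\<dots> = (\<lambda>m. \<omega> ^ Suc k * powA n \<omega> (uA 1) (Suc k) m)"
    unfolding Suc mulA_smult_left mulA_smult_right by (simp add: powA_def mult_ac)
  finally show ?case .
qed

lemma powA_w_lt: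
  assumes "2 \<le> n" "k < n"
  shows "powA n \<omega> (\<lambda>l. \<omega> * uA 1 l) k = (\<lambda>m. if m = k then \<omega> ^ k else 0)"
  unfolding powA_w unfolding powA_u1_lt[OF assms] unfolding uA_def by auto

lemma gact_closed:
  assumes "2 \<le> n"
  shows "gact n \<omega> b = (\<lambda>i. if i < n then \<omega> ^ i * b i else 0)"
proof
  fix m
  have "gact n \<omega> b m = (\<Sum>k<n. if k = m then b k * \<omega> ^ k else 0)"
    unfolding gact_def
    by (intro sum.cong refl) (simp add: powA_w_lt[OF assms])
  then show "gact n \<omega> b m = (if m < n then \<omega> ^ m * b m else 0)"
    by (simp add: mult.commute)
qed

definition qint :: "'k::field \<Rightarrow> nat \<Rightarrow> 'k" where
  "qint \<omega> k = (\<Sum>i<k. \<omega> ^ i)"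

lemma qint_Suc: "qint \<omega> (Suc k) = 1 + \<omega> * qint \<omega> k"
  unfolding qint_def sum.lessThan_Suc_shift by (simp add: sum_distrib_left)

lemma xbasis_closed:
  assumes "2 \<le> n"
  shows "k < n \<Longrightarrow> xbasis n \<omega> k = (\<lambda>m. if Suc m = k then qint \<omega> k else 0)"
proof (induction k)
  case 0 then show ?case by simp
next
  case (Suc k)
  have n0: "0 < n" using assms by simp
  have k: "k < n" using Suc by simp
  have s: "supp n (powA n \<omega> (uA 1) k)" unfolding powA_u1_lt[OF assms k] using k by (simp add: supp_def uA_def)
  have "xbasis n \<omega> (Suc k) = (\<lambda>m. mulA n \<omega> (uA 0) (powA n \<omega> (uA 1) k) m
          + mulA n \<omega> (\<lambda>l. \<omega> * uA 1 l) (xbasis n \<omega> k) m)" by simp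
  also have "\<dots> = (\<lambda>m. uA k m + \<omega> * mulA n \<omega> (uA 1) (xbasis n \<omega> k) m)"
    unfolding mulA_unit_left[OF n0 s] unfolding powA_u1_lt[OF assms k] mulA_smult_left by simp
  also have "\<dots> = (\<lambda>m. uA k m + \<omega> * (\<Sum>j<n. (if Suc j = k then qint \<omega> k else 0) * Mc n \<omega> 1 j m))"
    using Suc k assms by (simp add: mulA_uA_left)
  also have "\<dots> = (\<lambda>m. if Suc m = Suc k then qint \<omega> (Suc k) else 0)"
  proof
    fix m
    show "uA k m + \<omega> * (\<Sum>j<n. (if Suc j = k then qint \<omega> k else 0) * Mc n \<omega> 1 j m)
          = (if Suc m = Suc k then qint \<omega> (Suc k) else 0)"
    proof (cases k)
      case 0 then show ?thesis by (simp add: uA_def qint_def)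
    next
      case (Suc k')
      have "(\<Sum>j<n. (if Suc j = k then qint \<omega> k else 0) * Mc n \<omega> 1 j m) = qint \<omega> k * Mc n \<omega> 1 k' m"
        using Suc k by simp
      also have "Mc n \<omega> 1 k' m = (if m = k then 1 else 0)"
        using Suc k by (auto simp: Mc_def)
      finally show ?thesis by (simp add: uA_def qint_Suc)
    qed
  qed
  finally show ?case .
qed

lemma xact_closed:
  assumes "2 \<le> n"
  shows "xact n \<omega> b = (\<lambda>i. if Suc i < n then qint \<omega> (Suc i) * b (Suc i) else 0)"
proof
  fix i
  have "xact n \<omega> b i = (\<Sum>k<n. if k = Suc i then b k * qint \<omega> k else 0)"
    unfolding xact_def by (intro sum.cong refl) (auto simp: xbasis_closed[OF assms])
  then show "xact n \<omega> b i = (if Suc i < n then qint \<omega> (Suc i) * b (Suc i) else 0)"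
    by (simp add: mult.commute)
qed

definition qf :: "'k::field \<Rightarrow> nat \<Rightarrow> nat \<Rightarrow> 'k" where
  "qf \<omega> q e = (\<Prod>t<e. qint \<omega> (q - t))"

lemma qf_0 [simp]: "qf \<omega> q 0 = 1" by (simp add: qf_def)
lemma qf_Suc: "qf \<omega> q (Suc e) = qf \<omega> q e * qint \<omega> (q - e)"
  by (simp add: qf_def)

lemma qf_add: "qf \<omega> q (d + e) = qf \<omega> q d * qf \<omega> (q - d) e"
  by (induction e) (simp_all add: qf_Suc diff_diff_add mult.assoc)

definition actc :: "nat \<Rightarrow> 'k::field \<Rightarrow> nat \<Rightarrow> nat \<Rightarrow> (nat \<Rightarrow> 'k) \<Rightarrow> nat \<Rightarrow> 'k" where
  "actc n \<omega> c e b = (\<lambda>i. if i + e < n then \<omega> ^ (c * i) * qf \<omega> (i + e) e * b (i + e) else 0)"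

lemma actc_supp: "supp n (actc n \<omega> c e b)"
  by (simp add: supp_def actc_def)

lemma gact_iter:
  assumes "2 \<le> n" "supp n b"
  shows "(gact n \<omega> ^^ c) b = (\<lambda>i. \<omega> ^ (c * i) * b i)"
proof (induction c)
  case 0 then show ?case by simp
next
  case (Suc c)
  have "(gact n \<omega> ^^ Suc c) b = gact n \<omega> ((gact n \<omega> ^^ c) b)" by simp
  also have "\<dots> = gact n \<omega> (\<lambda>i. \<omega> ^ (c * i) * b i)" by (simp only: Suc)
  also have "\<dots> = (\<lambda>i. \<omega> ^ (Suc c * i) * b i)"
    unfolding gact_closed[OF assms(1)] using assms(2)
    by (auto simp: supp_def fun_eq_iff power_add mult_ac)
  finally show ?case .
qed

lemma xact_iter:
  assumes "2 \<le> n" "supp n b"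
  shows "(xact n \<omega> ^^ e) b = (\<lambda>i. if i + e < n then qf \<omega> (i + e) e * b (i + e) else 0)"
proof (induction e)
  case 0 then show ?case using assms by (auto simp: supp_def fun_eq_iff)
next
  case (Suc e)
  have "(xact n \<omega> ^^ Suc e) b = xact n \<omega> ((xact n \<omega> ^^ e) b)" by simp
  also have "\<dots> = xact n \<omega> (\<lambda>i. if i + e < n then qf \<omega> (i + e) e * b (i + e) else 0)" by (simp only: Suc)
  also have "\<dots> = (\<lambda>i. if i + Suc e < n then qf \<omega> (i + Suc e) (Suc e) * b (i + Suc e) else 0)"
  proof
    fix i
    have "qf \<omega> (i + Suc e) (Suc e) = qf \<omega> (Suc i + e) e * qint \<omega> (Suc i)"
      by (simp add: qf_Suc)
    then show "xact n \<omega> (\<lambda>i. if i + e < n then qf \<omega> (i + e) e * b (i + e) else 0) i = (if i + Suc e < n then qf \<omega> (i + Suc e) (Suc e) * b (i + Suc e) else 0)"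
      unfolding xact_closed[OF assms(1)] by (auto simp: mult_ac)
  qed
  finally show ?case .
qed

lemma actH_closed:
  assumes "2 \<le> n" "c < n" "e < n" "supp n b"
  shows "actH n \<omega> (basisH c e) b = actc n \<omega> c e b"
proof
  fix m
  have s: "supp n ((xact n \<omega> ^^ e) b)" using assms by (simp add: xact_iter supp_def)
  have "actH n \<omega> (basisH c e) b m = ((gact n \<omega> ^^ c) ((xact n \<omega> ^^ e) b)) m"
  proof -
    have c: "(if P \<and> Q then x else 0) = (if P then if Q then x else 0 else 0)" for P Q and x :: 'a
      by simp
    show ?thesis unfolding actH_def basisH_def using assms(2,3) by (simp add: c)
  qed
  also have "\<dots> = actc n \<omega> c e b m"
    unfolding gact_iter[OF assms(1) s] unfolding xact_iter[OF assms(1,4)] actc_def by (simp add: mult_ac)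
  finally show "actH n \<omega> (basisH c e) b m = actc n \<omega> c e b m" .
qed

lemma pow_mod_n:
  fixes \<omega> :: "'k::field"
  assumes "\<omega> ^ n = 1"
  shows "\<omega> ^ (x mod n * i) = \<omega> ^ (x * i)"
proof -
  have e: "x * i = x mod n * i + n * (x div n * i)"
    using mod_mult_div_eq[of x n] by (metis add_mult_distrib mult.assoc)
  have "\<omega> ^ (x * i) = \<omega> ^ (x mod n * i + n * (x div n * i))"
    by (subst e) (rule refl)
  also have "\<dots> = \<omega> ^ (x mod n * i) * (\<omega> ^ n) ^ (x div n * i)"
    by (simp only: power_add power_mult)
  finally show ?thesis using assms by simp
qed

lemma actc_comp:
  fixes \<omega> :: "'k::field"
  assumes "\<omega> ^ n = 1"
  shows "actc n \<omega> a b' (actc n \<omega> c' d b) =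
     (\<lambda>i. if b' + d < n then \<omega> ^ (b' * c') * actc n \<omega> ((a + c') mod n) (b' + d) b i else 0)"
proof
  fix i
  show "actc n \<omega> a b' (actc n \<omega> c' d b) i =
     (if b' + d < n then \<omega> ^ (b' * c') * actc n \<omega> ((a + c') mod n) (b' + d) b i else 0)"
  proof (cases "i + b' + d < n")
    case True
    have q: "qf \<omega> (i + (b' + d)) (b' + d) = qf \<omega> (i + b' + d) d * qf \<omega> (i + b') b'"
      using qf_add[of \<omega> "i + (b' + d)" d b'] by (simp add: add.commute add.left_commute)
    have w: "\<omega> ^ ((a + c') mod n * i) = \<omega> ^ ((a + c') * i)" by (rule pow_mod_n[OF assms])
    have "\<omega> ^ (a * i) * \<omega> ^ (c' * (i + b')) = \<omega> ^ (b' * c') * \<omega> ^ ((a + c') * i)"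
      by (simp add: power_add[symmetric] algebra_simps)
    then show ?thesis using True unfolding actc_def
      by (simp add: q w add.assoc)
  next
    case False
    then show ?thesis unfolding actc_def by auto
  qed
qed

lemma sw36:
  "(\<Sum>x1\<in>A1. \<Sum>x2\<in>A2. \<Sum>x3\<in>A3. \<Sum>y1\<in>B1. \<Sum>y2\<in>B2. \<Sum>y3\<in>B3. \<Sum>y4\<in>B4. \<Sum>y5\<in>B5. \<Sum>y6\<in>B6. f x1 x2 x3 y1 y2 y3 y4 y5 y6)
 = (\<Sum>y1\<in>B1. \<Sum>y2\<in>B2. \<Sum>y3\<in>B3. \<Sum>y4\<in>B4. \<Sum>y5\<in>B5. \<Sum>y6\<in>B6. \<Sum>x1\<in>A1. \<Sum>x2\<in>A2. \<Sum>x3\<in>A3. f x1 x2 x3 y1 y2 y3 y4 y5 y6)"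
proof -
  have "(\<Sum>x1\<in>A1. \<Sum>x2\<in>A2. \<Sum>x3\<in>A3. \<Sum>y1\<in>B1. \<Sum>y2\<in>B2. \<Sum>y3\<in>B3. \<Sum>y4\<in>B4. \<Sum>y5\<in>B5. \<Sum>y6\<in>B6. f x1 x2 x3 y1 y2 y3 y4 y5 y6)
   = (\<Sum>x1\<in>A1. \<Sum>x2\<in>A2. \<Sum>y1\<in>B1. \<Sum>y2\<in>B2. \<Sum>y3\<in>B3. \<Sum>y4\<in>B4. \<Sum>y5\<in>B5. \<Sum>y6\<in>B6. \<Sum>x3\<in>A3. f x1 x2 x3 y1 y2 y3 y4 y5 y6)"
    by (rule sum.cong[OF refl], rule sum.cong[OF refl], rule mv6)
  also have "\<dots> = (\<Sum>x1\<in>A1. \<Sum>y1\<in>B1. \<Sum>y2\<in>B2. \<Sum>y3\<in>B3. \<Sum>y4\<in>B4. \<Sum>y5\<in>B5. \<Sum>y6\<in>B6. \<Sum>x2\<in>A2. \<Sum>x3\<in>A3. f x1 x2 x3 y1 y2 y3 y4 y5 y6)"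
    by (rule sum.cong[OF refl], rule mv6)
  also have "\<dots> = (\<Sum>y1\<in>B1. \<Sum>y2\<in>B2. \<Sum>y3\<in>B3. \<Sum>y4\<in>B4. \<Sum>y5\<in>B5. \<Sum>y6\<in>B6. \<Sum>x1\<in>A1. \<Sum>x2\<in>A2. \<Sum>x3\<in>A3. f x1 x2 x3 y1 y2 y3 y4 y5 y6)"
    by (rule mv6)
  finally show ?thesis .
qed

lemma sw33:
  "(\<Sum>x1\<in>A1. \<Sum>x2\<in>A2. \<Sum>x3\<in>A3. \<Sum>y1\<in>B1. \<Sum>y2\<in>B2. \<Sum>y3\<in>B3. f x1 x2 x3 y1 y2 y3)
 = (\<Sum>y1\<in>B1. \<Sum>y2\<in>B2. \<Sum>y3\<in>B3. \<Sum>x1\<in>A1. \<Sum>x2\<in>A2. \<Sum>x3\<in>A3. f x1 x2 x3 y1 y2 y3)"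
proof -
  have "(\<Sum>x1\<in>A1. \<Sum>x2\<in>A2. \<Sum>x3\<in>A3. \<Sum>y1\<in>B1. \<Sum>y2\<in>B2. \<Sum>y3\<in>B3. f x1 x2 x3 y1 y2 y3)
   = (\<Sum>x1\<in>A1. \<Sum>x2\<in>A2. \<Sum>y1\<in>B1. \<Sum>y2\<in>B2. \<Sum>y3\<in>B3. \<Sum>x3\<in>A3. f x1 x2 x3 y1 y2 y3)"
    by (rule sum.cong[OF refl], rule sum.cong[OF refl], rule mv3)
  also have "\<dots> = (\<Sum>x1\<in>A1. \<Sum>y1\<in>B1. \<Sum>y2\<in>B2. \<Sum>y3\<in>B3. \<Sum>x2\<in>A2. \<Sum>x3\<in>A3. f x1 x2 x3 y1 y2 y3)"
    by (rule sum.cong[OF refl], rule mv3)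
  also have "\<dots> = (\<Sum>y1\<in>B1. \<Sum>y2\<in>B2. \<Sum>y3\<in>B3. \<Sum>x1\<in>A1. \<Sum>x2\<in>A2. \<Sum>x3\<in>A3. f x1 x2 x3 y1 y2 y3)"
    by (rule mv3)
  finally show ?thesis .
qed

definition Phi :: "nat \<Rightarrow> 'k::field \<Rightarrow> (nat \<Rightarrow> nat \<Rightarrow> nat \<Rightarrow> 'k) \<Rightarrow> (nat \<Rightarrow> 'k) \<Rightarrow> nat \<Rightarrow> 'k" where
  "Phi n \<omega> T b = (\<lambda>m. \<Sum>c<n. \<Sum>e<n. \<Sum>k<n.
       T c e k * mulA n \<omega> (actH n \<omega> (basisH c e) b) (uA k) m)"

lemma Phi_closed:
  assumes "2 \<le> n" "supp n b"
  shows "Phi n \<omega> T b = (\<lambda>m. \<Sum>c<n. \<Sum>e<n. \<Sum>k<n. T c e k * (\<Sum>i<n. actc n \<omega> c e b i * Mc n \<omega> i k m))"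
  unfolding Phi_def using assms
  by (intro ext sum.cong refl) (simp add: actH_closed mulA_uA_right)

lemma Mc_sum: "Mc n \<omega> x y m = Mc n \<omega> (x + y) 0 m"
  by (simp add: Mc_def)

lemma mulA_Phi:
  assumes "2 \<le> n" "k' < n" "supp n B"
  shows "mulA n \<omega> (Phi n \<omega> S B) (uA k') m =
    (\<Sum>a<n. \<Sum>b'<n. \<Sum>k<n. S a b' k * (\<Sum>i<n. actc n \<omega> a b' B i * Mc n \<omega> (i + k + k') 0 m))"
proof -
  have n0: "0 < n" using assms by simp
  have "mulA n \<omega> (Phi n \<omega> S B) (uA k') m = (\<Sum>j<n. Phi n \<omega> S B j * Mc n \<omega> j k' m)"
    using n0 assms by (simp add: mulA_uA_right)
  also have "\<dots> = (\<Sum>j<n. \<Sum>a<n. \<Sum>b'<n. \<Sum>k<n. \<Sum>i<n.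
        S a b' k * actc n \<omega> a b' B i * (Mc n \<omega> i k j * Mc n \<omega> j k' m))"
    unfolding Phi_closed[OF assms(1,3)] sum_distrib_right sum_distrib_left
    by (intro sum.cong refl) (simp add: mult_ac)
  also have "\<dots> = (\<Sum>a<n. \<Sum>b'<n. \<Sum>k<n. \<Sum>i<n. \<Sum>j<n.
        S a b' k * actc n \<omega> a b' B i * (Mc n \<omega> i k j * Mc n \<omega> j k' m))"
    by (rule mv4)
  also have "\<dots> = (\<Sum>a<n. \<Sum>b'<n. \<Sum>k<n. \<Sum>i<n. S a b' k * actc n \<omega> a b' B i * Mc n \<omega> (i + k + k') 0 m)"
    by (intro sum.cong refl) (simp only: sum_distrib_left[symmetric] Mc_assoc[OF n0], simp add: Mc_def)
  also have "\<dots> = (\<Sum>a<n. \<Sum>b'<n. \<Sum>k<n. S a b' k * (\<Sum>i<n. actc n \<omega> a b' B i * Mc n \<omega> (i + k + k') 0 m))"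
    by (simp add: sum_distrib_left mult.assoc)
  finally show ?thesis .
qed

lemma collapse3:
  fixes n C E K :: nat
  assumes "0 < n"
  shows "(\<Sum>c<n. \<Sum>e<n. \<Sum>k0<n. if C mod n = c \<and> E = e \<and> e < n \<and> K mod n = k0 then F c e k0 else 0)
     = (if E < n then F (C mod n) E (K mod n) else 0)"
proof -
  have s1: "(\<Sum>k0<n. if C mod n = c \<and> E = e \<and> e < n \<and> K mod n = k0 then F c e k0 else 0)
      = (if C mod n = c \<and> E = e \<and> e < n then F c e (K mod n) else 0)" for c e
  proof -
    have "(\<Sum>k0<n. if C mod n = c \<and> E = e \<and> e < n \<and> K mod n = k0 then F c e k0 else 0)
       = (\<Sum>k0<n. if k0 = K mod n then (if C mod n = c \<and> E = e \<and> e < n then F c e k0 else 0) else 0)"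
      by (intro sum.cong refl) auto
    also have "\<dots> = (if C mod n = c \<and> E = e \<and> e < n then F c e (K mod n) else 0)"
      using assms by (subst sum.delta) (simp_all add: mod_less_divisor)
    finally show ?thesis .
  qed
  have s2: "(\<Sum>e<n. if C mod n = c \<and> E = e \<and> e < n then F c e (K mod n) else 0)
      = (if C mod n = c \<and> E < n then F c E (K mod n) else 0)" for c
  proof -
    have "(\<Sum>e<n. if C mod n = c \<and> E = e \<and> e < n then F c e (K mod n) else 0)
       = (\<Sum>e<n. if e = E then (if C mod n = c \<and> E < n then F c e (K mod n) else 0) else 0)"
      by (intro sum.cong refl) auto
    also have "\<dots> = (if C mod n = c \<and> E < n then F c E (K mod n) else 0)"
      by (subst sum.delta) simp_all
    finally show ?thesis .
  qed
  have s3: "(\<Sum>c<n. if C mod n = c \<and> E < n then F c E (K mod n) else 0)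
      = (if E < n then F (C mod n) E (K mod n) else 0)"
  proof -
    have "(\<Sum>c<n. if C mod n = c \<and> E < n then F c E (K mod n) else 0)
       = (\<Sum>c<n. if c = C mod n then (if E < n then F c E (K mod n) else 0) else 0)"
      by (intro sum.cong refl) auto
    also have "\<dots> = (if E < n then F (C mod n) E (K mod n) else 0)"
      using assms by (subst sum.delta) (simp_all add: mod_less_divisor)
    finally show ?thesis .
  qed
  show ?thesis by (simp only: s1 s2 s3)
qed

lemma wrap_pow:
  fixes \<omega> :: "'k::field" and n k k' :: nat
  assumes "0 < n" "k < n" "k' < n"
  shows "(if n \<le> k + k' then \<omega> else 1) = \<omega> ^ ((k + k') div n)"
proof (cases "n \<le> k + k'")
  case True
  then have "(k + k') div n = 1" using assms by (simp add: le_div_geq div_less)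
  then show ?thesis using True by (simp add: power_one_right)
next
  case False then show ?thesis by simp
qed

lemma shift':
  assumes "0 < n"
  shows "\<omega> ^ ((k + k') div n) * Mc n \<omega> i ((k + k') mod n) m = Mc n \<omega> (i + k + k') 0 m"
  using Mc_shift[OF assms, of \<omega> "k + k'" i m] by (simp add: Mc_comm[of n \<omega> i] ac_simps)

lemma Phi_mul:
  assumes "2 \<le> n" "\<omega> ^ n = 1" "supp n b"
  shows "Phi n \<omega> (mulHA n \<omega> S T) b m = (\<Sum>c'<n. \<Sum>d<n. \<Sum>k'<n.
     T c' d k' * mulA n \<omega> (Phi n \<omega> S (actH n \<omega> (basisH c' d) b)) (uA k') m)"
proof -
  have n0: "0 < n" using assms by simp
  define G where "G a b' k c' d k' = S a b' k * T c' d k' *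
      (\<Sum>i<n. actc n \<omega> a b' (actc n \<omega> c' d b) i * Mc n \<omega> (i + k + k') 0 m)" for a b' k c' d k'
  define X where "X c e k0 = (\<Sum>i<n. actc n \<omega> c e b i * Mc n \<omega> i k0 m)" for c e k0
  define W where "W a b' k c' d k' = S a b' k * T c' d k' * \<omega> ^ (b' * c') * (if n \<le> k + k' then \<omega> else 1)"
    for a b' k c' d k'
  have "(\<Sum>c'<n. \<Sum>d<n. \<Sum>k'<n.
     T c' d k' * mulA n \<omega> (Phi n \<omega> S (actH n \<omega> (basisH c' d) b)) (uA k') m)
    = (\<Sum>c'<n. \<Sum>d<n. \<Sum>k'<n. T c' d k' *
         (\<Sum>a<n. \<Sum>b'<n. \<Sum>k<n. S a b' k * (\<Sum>i<n. actc n \<omega> a b' (actc n \<omega> c' d b) i * Mc n \<omega> (i + k + k') 0 m)))"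
    using assms by (intro sum.cong refl) (simp add: actH_closed mulA_Phi actc_supp)
  also have "\<dots> = (\<Sum>c'<n. \<Sum>d<n. \<Sum>k'<n. \<Sum>a<n. \<Sum>b'<n. \<Sum>k<n. G a b' k c' d k')"
    unfolding G_def by (simp add: sum_distrib_left mult.assoc mult.left_commute)
  also have "\<dots> = (\<Sum>a<n. \<Sum>b'<n. \<Sum>k<n. \<Sum>c'<n. \<Sum>d<n. \<Sum>k'<n. G a b' k c' d k')"
    by (rule sw33)
  finally have R: "(\<Sum>c'<n. \<Sum>d<n. \<Sum>k'<n.
     T c' d k' * mulA n \<omega> (Phi n \<omega> S (actH n \<omega> (basisH c' d) b)) (uA k') m)
    = (\<Sum>a<n. \<Sum>b'<n. \<Sum>k<n. \<Sum>c'<n. \<Sum>d<n. \<Sum>k'<n. G a b' k c' d k')" .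
  have "Phi n \<omega> (mulHA n \<omega> S T) b m = (\<Sum>c<n. \<Sum>e<n. \<Sum>k0<n.
      (\<Sum>a<n. \<Sum>b'<n. \<Sum>k<n. \<Sum>c'<n. \<Sum>d<n. \<Sum>k'<n.
        if (a + c') mod n = c \<and> b' + d = e \<and> e < n \<and> (k + k') mod n = k0
        then W a b' k c' d k' else 0) * X c e k0)"
    unfolding Phi_closed[OF assms(1,3)] mulHA_def X_def W_def by (rule refl)
  also have "\<dots> = (\<Sum>c<n. \<Sum>e<n. \<Sum>k0<n. \<Sum>a<n. \<Sum>b'<n. \<Sum>k<n. \<Sum>c'<n. \<Sum>d<n. \<Sum>k'<n.
        if (a + c') mod n = c \<and> b' + d = e \<and> e < n \<and> (k + k') mod n = k0
        then W a b' k c' d k' * X c e k0 else 0)"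
    by (simp only: sum_distrib_right if0_mult)
  also have "\<dots> = (\<Sum>a<n. \<Sum>b'<n. \<Sum>k<n. \<Sum>c'<n. \<Sum>d<n. \<Sum>k'<n. \<Sum>c<n. \<Sum>e<n. \<Sum>k0<n.
        if (a + c') mod n = c \<and> b' + d = e \<and> e < n \<and> (k + k') mod n = k0
        then W a b' k c' d k' * X c e k0 else 0)"
    by (rule sw36)
  also have "\<dots> = (\<Sum>a<n. \<Sum>b'<n. \<Sum>k<n. \<Sum>c'<n. \<Sum>d<n. \<Sum>k'<n.
        if b' + d < n then W a b' k c' d k' * X ((a + c') mod n) (b' + d) ((k + k') mod n) else 0)"
    by (simp only: collapse3[OF n0])
  also have "\<dots> = (\<Sum>a<n. \<Sum>b'<n. \<Sum>k<n. \<Sum>c'<n. \<Sum>d<n. \<Sum>k'<n. G a b' k c' d k')"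
  proof (intro sum.cong refl)
    fix a b' k c' d k'
    assume "a \<in> {..<n}" "b' \<in> {..<n}" "k \<in> {..<n}" "c' \<in> {..<n}" "d \<in> {..<n}" "k' \<in> {..<n}"
    then have lt: "k < n" "k' < n" by auto
    show "(if b' + d < n then W a b' k c' d k' * X ((a + c') mod n) (b' + d) ((k + k') mod n) else 0)
        = G a b' k c' d k'"
    proof (cases "b' + d < n")
      case True
      have "W a b' k c' d k' * X ((a + c') mod n) (b' + d) ((k + k') mod n)
          = S a b' k * T c' d k' * (\<Sum>i<n. \<omega> ^ (b' * c') * actc n \<omega> ((a + c') mod n) (b' + d) b i *
               (\<omega> ^ ((k + k') div n) * Mc n \<omega> i ((k + k') mod n) m))"
        unfolding W_def X_def wrap_pow[OF n0 lt] sum_distrib_left by (intro sum.cong refl) (simp add: mult_ac)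
      also have "\<dots> = G a b' k c' d k'"
        unfolding G_def shift'[OF n0] actc_comp[OF assms(2)] using True by simp
      finally show ?thesis using True by simp
    next
      case False
      then show ?thesis unfolding G_def actc_comp[OF assms(2)] by simp
    qed
  qed
  finally show ?thesis using R by simp
qed

lemma mulA_lin_right:
  assumes "0 < n" "i < n"
  shows "mulA n \<omega> (uA i) (\<lambda>m. \<Sum>c<n. \<Sum>e<n. \<Sum>k<n. t c e k * f c e k m) m
       = (\<Sum>c<n. \<Sum>e<n. \<Sum>k<n. t c e k * mulA n \<omega> (uA i) (f c e k) m)"
proof -
  have "mulA n \<omega> (uA i) (\<lambda>m. \<Sum>c<n. \<Sum>e<n. \<Sum>k<n. t c e k * f c e k m) m
      = (\<Sum>j<n. \<Sum>c<n. \<Sum>e<n. \<Sum>k<n. t c e k * (f c e k j * Mc n \<omega> i j m))"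
    unfolding mulA_uA_left[OF assms] sum_distrib_right by (simp add: mult.assoc)
  also have "\<dots> = (\<Sum>c<n. \<Sum>e<n. \<Sum>k<n. \<Sum>j<n. t c e k * (f c e k j * Mc n \<omega> i j m))"
    by (rule mv3)
  also have "\<dots> = (\<Sum>c<n. \<Sum>e<n. \<Sum>k<n. t c e k * mulA n \<omega> (uA i) (f c e k) m)"
    unfolding mulA_uA_left[OF assms] sum_distrib_left by (rule refl)
  finally show ?thesis .
qed

lemma actH_supp:
  assumes "2 \<le> n" "c < n" "e < n" "supp n b"
  shows "supp n (actH n \<omega> (basisH c e) b)"
  using actH_closed[OF assms] actc_supp by metis

lemma Phi_step:
  assumes "2 \<le> n" "\<omega> ^ n = 1" "supp n b"
    and base: "\<And>B. supp n B \<Longrightarrow> Phi n \<omega> S B = mulA n \<omega> (uA 1) B"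
  shows "Phi n \<omega> (mulHA n \<omega> S T) b = mulA n \<omega> (uA 1) (Phi n \<omega> T b)"
proof
  fix m
  have n0: "0 < n" and n1: "1 < n" using assms by auto
  have "Phi n \<omega> (mulHA n \<omega> S T) b m = (\<Sum>c'<n. \<Sum>d<n. \<Sum>k'<n.
     T c' d k' * mulA n \<omega> (mulA n \<omega> (uA 1) (actH n \<omega> (basisH c' d) b)) (uA k') m)"
    unfolding Phi_mul[OF assms(1-3)]
  proof (intro sum.cong refl)
    fix c' d k' assume "c' \<in> {..<n}" "d \<in> {..<n}" "k' \<in> {..<n}"
    then have "supp n (actH n \<omega> (basisH c' d) b)" using assms by (intro actH_supp) auto
    then show "T c' d k' * mulA n \<omega> (Phi n \<omega> S (actH n \<omega> (basisH c' d) b)) (uA k') m =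
         T c' d k' * mulA n \<omega> (mulA n \<omega> (uA 1) (actH n \<omega> (basisH c' d) b)) (uA k') m"
      by (simp only: base)
  qed
  also have "\<dots> = (\<Sum>c'<n. \<Sum>d<n. \<Sum>k'<n.
     T c' d k' * mulA n \<omega> (uA 1) (mulA n \<omega> (actH n \<omega> (basisH c' d) b) (uA k')) m)"
    by (simp add: mulA_assoc[OF n0])
  also have "\<dots> = mulA n \<omega> (uA 1) (Phi n \<omega> T b) m"
    unfolding Phi_def by (rule mulA_lin_right[OF n0 n1, symmetric])
  finally show "Phi n \<omega> (mulHA n \<omega> S T) b m = mulA n \<omega> (uA 1) (Phi n \<omega> T b) m" .
qed

lemma Phi_unit:
  assumes "2 \<le> n" "supp n b"
  shows "Phi n \<omega> unitHA b = b"
proof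
  fix m
  have n0: "0 < n" using assms by simp
  have "Phi n \<omega> unitHA b m = (\<Sum>c<n. \<Sum>e<n. \<Sum>k<n.
      if 0 mod n = c \<and> 0 = e \<and> e < n \<and> 0 mod n = k then mulA n \<omega> (actH n \<omega> (basisH c e) b) (uA k) m else 0)"
    unfolding Phi_def unitHA_def by (intro sum.cong refl) auto
  also have "\<dots> = mulA n \<omega> (actH n \<omega> (basisH 0 0) b) (uA 0) m"
    using collapse3[OF n0, of 0 0 0 "\<lambda>c e k. mulA n \<omega> (actH n \<omega> (basisH c e) b) (uA k) m"] n0 by simp
  also have "\<dots> = b m"
  proof -
    have "actc n \<omega> 0 0 b = b" using assms(2) by (auto simp: actc_def supp_def fun_eq_iff)
    then show ?thesis using actH_closed[OF assms(1) n0 n0 assms(2)] mulA_unit_right[OF n0 assms(2)] by simp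
  qed
  finally show "Phi n \<omega> unitHA b m = b m" .
qed

lemma Phi_lin:
  "Phi n \<omega> (\<lambda>c e k. \<Sum>p<n. a p * P p c e k) b m = (\<Sum>p<n. a p * Phi n \<omega> (P p) b m)"
proof -
  have "Phi n \<omega> (\<lambda>c e k. \<Sum>p<n. a p * P p c e k) b m
    = (\<Sum>c<n. \<Sum>e<n. \<Sum>k<n. \<Sum>p<n. a p * (P p c e k * mulA n \<omega> (actH n \<omega> (basisH c e) b) (uA k) m))"
    unfolding Phi_def sum_distrib_right by (simp add: mult.assoc)
  also have "\<dots> = (\<Sum>p<n. \<Sum>c<n. \<Sum>e<n. \<Sum>k<n. a p * (P p c e k * mulA n \<omega> (actH n \<omega> (basisH c e) b) (uA k) m))"
    by (rule mv3[symmetric])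
  also have "\<dots> = (\<Sum>p<n. a p * Phi n \<omega> (P p) b m)"
    unfolding Phi_def sum_distrib_left by (rule refl)
  finally show ?thesis .
qed

lemma mulA_u1_iter:
  assumes "2 \<le> n" "supp n b"
  shows "p < n \<Longrightarrow> (mulA n \<omega> (uA 1) ^^ p) b = mulA n \<omega> (uA p) b"
proof (induction p)
  case 0 then show ?case using assms mulA_unit_left[of n b \<omega>] by simp
next
  case (Suc p)
  have n0: "0 < n" using assms by simp
  have n1: "1 < n" using assms by simp
  have "mulA n \<omega> (uA 1) (uA p) = (\<lambda>m. \<Sum>j<n. uA p j * Mc n \<omega> 1 j m)"
    by (rule mulA_uA_left[OF n0 n1])
  also have "\<dots> = (\<lambda>m. Mc n \<omega> 1 p m)"
    using Suc.prems by (simp add: uA_def)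
  also have "\<dots> = uA (Suc p)"
    using Suc.prems by (auto simp: uA_def Mc_def fun_eq_iff Suc_eq_plus1_left)
  finally have "mulA n \<omega> (uA 1) (uA p) = uA (Suc p)" .
  then show ?case using Suc by (simp add: mulA_assoc[OF n0, symmetric])
qed

lemma qint_mult: "(\<omega> - 1) * qint \<omega> k = \<omega> ^ k - (1::'k::field)"
  by (induction k) (simp_all add: qint_Suc qint_def[of \<omega> 0] algebra_simps)

lemma tri_Suc: "Suc i * (Suc i + 1) div 2 = i * (i + 1) div 2 + Suc i"
proof -
  have e: "Suc i * (Suc i + 1) = i * (i + 1) + 2 * Suc i" by (simp add: algebra_simps)
  have "Suc i * (Suc i + 1) div 2 = (i * (i + 1) + 2 * Suc i) div 2" by (subst e) (rule refl)
  also have "\<dots> = Suc i + i * (i + 1) div 2" by (rule div_mult_self2) simp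
  finally show ?thesis by simp
qed

lemma tc_Suc: "taft_coef \<omega> (Suc i) = taft_coef \<omega> i * (\<omega> - 1) * \<omega> ^ Suc i"
  unfolding taft_coef_def tri_Suc by (simp add: power_add mult_ac)

definition Pv :: "'k::field \<Rightarrow> nat \<Rightarrow> nat \<Rightarrow> 'k" where
  "Pv \<omega> q i = (\<Prod>t<i. 1 - inverse \<omega> ^ (q - t))"

lemma Pv_Suc: "Pv \<omega> q (Suc i) = Pv \<omega> q i * (1 - inverse \<omega> ^ (q - i))"
  by (simp add: Pv_def)

lemma inv_pow_cancel: "(\<omega>::'k::field) \<noteq> 0 \<Longrightarrow> inverse \<omega> ^ k * \<omega> ^ k = 1"
  by (simp add: power_inverse)

lemma kappa_ind:
  fixes \<omega> :: "'k::field"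
  assumes nz: "\<omega> \<noteq> 0"
  shows "i \<le> q \<Longrightarrow> taft_coef \<omega> i * inverse \<omega> ^ ((i + 1) * q) * qf \<omega> q i = inverse \<omega> ^ (q - i) * Pv \<omega> q i"
proof (induction i)
  case 0 then show ?case by (simp add: taft_coef_def Pv_def)
next
  case (Suc i)
  define v where "v = inverse \<omega>"
  obtain s where qs: "q = Suc i + s" using Suc.prems le_Suc_ex by blast
  have IH: "taft_coef \<omega> i * v ^ ((i + 1) * q) * qf \<omega> q i = v ^ (Suc s) * Pv \<omega> q i"
    using Suc qs by (simp add: v_def)
  have qi: "q - i = Suc s" using qs by simp
  have "taft_coef \<omega> (Suc i) * v ^ ((Suc i + 1) * q) * qf \<omega> q (Suc i)
      = (taft_coef \<omega> i * v ^ ((i + 1) * q) * qf \<omega> q i) * ((\<omega> - 1) * qint \<omega> (q - i)) * \<omega> ^ Suc i * v ^ q"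
    by (simp add: tc_Suc qf_Suc power_add mult_ac)
  also have "\<dots> = v ^ (Suc s) * Pv \<omega> q i * (\<omega> ^ Suc s - 1) * \<omega> ^ Suc i * (v ^ Suc i * v ^ s)"
    unfolding IH qint_mult qi by (simp add: qs power_add)
  also have "\<dots> = Pv \<omega> q i * v ^ s * ((v ^ Suc s * \<omega> ^ Suc s) - v ^ Suc s) * (\<omega> ^ Suc i * v ^ Suc i)"
    by (simp add: algebra_simps)
  also have "\<dots> = v ^ s * (Pv \<omega> q i * (1 - v ^ Suc s))"
  proof -
    have h1: "v ^ Suc s * \<omega> ^ Suc s = 1" unfolding v_def by (rule inv_pow_cancel[OF nz])
    have h2: "\<omega> ^ Suc i * v ^ Suc i = 1" unfolding v_def by (subst mult.commute) (rule inv_pow_cancel[OF nz])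
    show ?thesis unfolding h1 h2 by (simp add: mult_ac)
  qed
  also have "\<dots> = v ^ (q - Suc i) * Pv \<omega> q (Suc i)"
    by (simp add: Pv_Suc qi qs v_def)
  finally show ?case by (simp add: v_def)
qed

lemma root_pow:
  fixes \<omega> :: "'k::field"
  assumes "\<omega> ^ n = 1" "i < n"
  shows "\<omega> ^ (((n - (i + 1)) mod n) * q) = inverse \<omega> ^ ((i + 1) * q)"
proof -
  have nz: "\<omega> \<noteq> 0" using assms by (metis not_less0 power_0_left zero_neq_one)
  have "\<omega> ^ (n - (i + 1)) * \<omega> ^ (i + 1) = 1"
    using assms by (simp add: power_add[symmetric])
  then have "\<omega> ^ (n - (i + 1)) = inverse \<omega> ^ (i + 1)"
    using nz by (simp add: power_inverse field_simps)
  then show ?thesis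
    using pow_mod_n[OF assms(1), of "n - (i + 1)" q] by (simp add: power_mult)
qed

lemma kappa_sum:
  fixes \<omega> :: "'k::field"
  assumes "\<omega> ^ n = 1" "q < n"
  shows "(\<Sum>i<n. if i \<le> q then taft_coef \<omega> i * \<omega> ^ (((n - (i + 1)) mod n) * q) * qf \<omega> q i else 0) = 1"
proof -
  have nz: "\<omega> \<noteq> 0" using assms by (metis not_less0 power_0_left zero_neq_one)
  have "(\<Sum>i<n. if i \<le> q then taft_coef \<omega> i * \<omega> ^ (((n - (i + 1)) mod n) * q) * qf \<omega> q i else 0)
     = (\<Sum>i\<in>{i\<in>{..<n}. i \<le> q}. taft_coef \<omega> i * \<omega> ^ (((n - (i + 1)) mod n) * q) * qf \<omega> q i)"
    by (simp only: sum.inter_filter[OF finite_lessThan])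
  also have "{i\<in>{..<n}. i \<le> q} = {..<Suc q}" using assms by auto
  also have "(\<Sum>i<Suc q. taft_coef \<omega> i * \<omega> ^ (((n - (i + 1)) mod n) * q) * qf \<omega> q i)
      = (\<Sum>i<Suc q. Pv \<omega> q i - Pv \<omega> q (Suc i))"
  proof (intro sum.cong refl)
    fix i assume "i \<in> {..<Suc q}"
    then have iq: "i \<le> q" and inn: "i < n" using assms by auto
    show "taft_coef \<omega> i * \<omega> ^ (((n - (i + 1)) mod n) * q) * qf \<omega> q i = Pv \<omega> q i - Pv \<omega> q (Suc i)"
      unfolding root_pow[OF assms(1) inn] kappa_ind[OF nz iq] Pv_Suc by (simp add: algebra_simps)
  qed
  also have "\<dots> = Pv \<omega> q 0 - Pv \<omega> q (Suc q)" by (rule sum_lessThan_telescope')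
  also have "\<dots> = 1" by (simp add: Pv_def)
  finally show ?thesis .
qed

lemma mulH_xg:
  assumes "0 < n" "i < n"
  shows "mulH n \<omega> (xpowH n i) (gpowH n r) c e = (if c = r mod n \<and> e = i then \<omega> ^ (i * (r mod n)) else 0)"
proof -
  define Z where "Z = (if c = r mod n \<and> e = i then \<omega> ^ (i * (r mod n)) else 0)"
  have "mulH n \<omega> (xpowH n i) (gpowH n r) c e = (\<Sum>a<n. \<Sum>b<n. \<Sum>c'<n. \<Sum>d<n.
     (((Z * (if a = 0 then 1 else 0)) * (if b = i then 1 else 0)) * (if c' = r mod n then 1 else 0)) * (if d = 0 then 1 else 0))"
    unfolding mulH_def
  proof (intro sum.cong refl)
    fix a b c' d
    show "(if (a + c') mod n = c \<and> b + d = e \<and> e < n then xpowH n i a b * gpowH n r c' d * \<omega> ^ (b * c') else 0) =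
      Z * (if a = 0 then 1 else 0) * (if b = i then 1 else 0) * (if c' = r mod n then 1 else 0) * (if d = 0 then 1 else 0)"
      unfolding Z_def xpowH_def gpowH_def using assms by auto
  qed
  also have "\<dots> = Z" using assms by simp
  finally show ?thesis unfolding Z_def .
qed

lemma rho_u_closed:
  assumes "2 \<le> n" "e < n"
  shows "rho_u n \<omega> c e k = (\<Sum>i<n. if (n - (i + 1)) mod n = c \<and> i = e \<and> e < n \<and> (i + 1) mod n = k
      then taft_coef \<omega> i * \<omega> ^ (i * ((n - (i + 1)) mod n)) * \<omega> ^ ((i + 1) div n) else 0)"
  unfolding rho_u_def tensorHA_def
proof (intro sum.cong refl)
  fix i assume "i \<in> {..<n}"
  then have i: "i < n" by simp
  have n0: "0 < n" using assms by simp
  show "taft_coef \<omega> i * (mulH n \<omega> (xpowH n i) (gpowH n (n - (i + 1))) c e * powA n \<omega> (uA 1) (i + 1) k) =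
    (if (n - (i + 1)) mod n = c \<and> i = e \<and> e < n \<and> (i + 1) mod n = k
      then taft_coef \<omega> i * \<omega> ^ (i * ((n - (i + 1)) mod n)) * \<omega> ^ ((i + 1) div n) else 0)"
    unfolding mulH_xg[OF n0 i] powA_u1[OF assms(1)] using assms by auto
qed

lemma reindex_tri:
  fixes g :: "nat \<Rightarrow> 'a::comm_monoid_add"
  shows "(\<Sum>j<n. if j + i < n then g (j + i) else 0) = (\<Sum>q<n. if i \<le> q then g q else 0)"
proof (cases "i \<le> n")
  case True
  have "(\<Sum>j<n. if j + i < n then g (j + i) else 0) = (\<Sum>j\<in>{j\<in>{..<n}. j + i < n}. g (j + i))"
    by (simp only: sum.inter_filter[OF finite_lessThan])
  also have "{j\<in>{..<n}. j + i < n} = {0..<n - i}" by auto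
  also have "(\<Sum>j\<in>{0..<n - i}. g (j + i)) = (\<Sum>q\<in>{0 + i..<n - i + i}. g q)"
    by (rule sum.shift_bounds_nat_ivl[symmetric])
  also have "{0 + i..<n - i + i} = {q\<in>{..<n}. i \<le> q}" using True by auto
  also have "(\<Sum>q\<in>{q\<in>{..<n}. i \<le> q}. g q) = (\<Sum>q<n. if i \<le> q then g q else 0)"
    by (simp only: sum.inter_filter[OF finite_lessThan])
  finally show ?thesis .
next
  case False
  then show ?thesis by (intro trans[OF sum.neutral sum.neutral[symmetric]]) auto
qed

lemma Phi_base:
  assumes "2 \<le> n" "primitive_root_of_unity n \<omega>" "supp n B"
  shows "Phi n \<omega> (rho_u n \<omega>) B = mulA n \<omega> (uA 1) B"
proof
  fix m
  have n0: "0 < n" and n1: "1 < n" using assms by auto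
  have w: "\<omega> ^ n = 1" using assms(2) by (simp add: primitive_root_of_unity_def)
  define r where "r i = (n - (i + 1)) mod n" for i
  define tcw where "tcw i = taft_coef \<omega> i * \<omega> ^ (i * r i) * \<omega> ^ ((i + 1) div n)" for i
  define X where "X c e k = (\<Sum>j<n. actc n \<omega> c e B j * Mc n \<omega> j k m)" for c e k
  define \<kappa> where "\<kappa> i q = taft_coef \<omega> i * \<omega> ^ (r i * q) * qf \<omega> q i" for i q
  have "Phi n \<omega> (rho_u n \<omega>) B m = (\<Sum>c<n. \<Sum>e<n. \<Sum>k<n.
      (\<Sum>i<n. if (n - (i + 1)) mod n = c \<and> i = e \<and> e < n \<and> (i + 1) mod n = k then tcw i else 0) * X c e k)"
    unfolding Phi_closed[OF assms(1,3)] X_def tcw_def r_def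
    by (intro sum.cong refl) (simp add: rho_u_closed[OF assms(1)])
  also have "\<dots> = (\<Sum>c<n. \<Sum>e<n. \<Sum>k<n. \<Sum>i<n.
      if (n - (i + 1)) mod n = c \<and> i = e \<and> e < n \<and> (i + 1) mod n = k then tcw i * X c e k else 0)"
    by (simp only: sum_distrib_right if0_mult)
  also have "\<dots> = (\<Sum>i<n. \<Sum>c<n. \<Sum>e<n. \<Sum>k<n.
      if (n - (i + 1)) mod n = c \<and> i = e \<and> e < n \<and> (i + 1) mod n = k then tcw i * X c e k else 0)"
    by (rule mv3[symmetric])
  also have "\<dots> = (\<Sum>i<n. if i < n then tcw i * X ((n - (i + 1)) mod n) i ((i + 1) mod n) else 0)"
    by (simp only: collapse3[OF n0])
  also have "\<dots> = (\<Sum>i<n. \<Sum>j<n. if j + i < n then \<kappa> i (j + i) * B (j + i) * Mc n \<omega> (j + i + 1) 0 m else 0)"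
  proof (intro sum.cong refl)
    fix i assume "i \<in> {..<n}"
    then have i: "i < n" by simp
    have "tcw i * X (r i) i ((i + 1) mod n) = (\<Sum>j<n. taft_coef \<omega> i * \<omega> ^ (i * r i) * actc n \<omega> (r i) i B j *
        (\<omega> ^ ((i + 1) div n) * Mc n \<omega> j ((i + 1) mod n) m))"
      unfolding tcw_def X_def sum_distrib_left by (intro sum.cong refl) (simp add: mult_ac)
    also have "\<dots> = (\<Sum>j<n. if j + i < n then \<kappa> i (j + i) * B (j + i) * Mc n \<omega> (j + i + 1) 0 m else 0)"
    proof (intro sum.cong refl)
      fix j
      have e1: "\<omega> ^ ((i + 1) div n) * Mc n \<omega> j ((i + 1) mod n) m = Mc n \<omega> (j + i + 1) 0 m"
        by (rule shift'[OF n0])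
      have e2: "\<omega> ^ (i * r i) * \<omega> ^ (r i * j) = \<omega> ^ (r i * (j + i))"
        by (simp add: power_add[symmetric] algebra_simps)
      show "taft_coef \<omega> i * \<omega> ^ (i * r i) * actc n \<omega> (r i) i B j *
        (\<omega> ^ ((i + 1) div n) * Mc n \<omega> j ((i + 1) mod n) m) =
        (if j + i < n then \<kappa> i (j + i) * B (j + i) * Mc n \<omega> (j + i + 1) 0 m else 0)"
        unfolding e1 actc_def \<kappa>_def using e2 by (simp add: mult_ac)
    qed
    finally show "(if i < n then tcw i * X ((n - (i + 1)) mod n) i ((i + 1) mod n) else 0) =
       (\<Sum>j<n. if j + i < n then \<kappa> i (j + i) * B (j + i) * Mc n \<omega> (j + i + 1) 0 m else 0)"
      using i by (simp add: r_def)
  qed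
  also have "\<dots> = (\<Sum>i<n. \<Sum>q<n. if i \<le> q then \<kappa> i q * B q * Mc n \<omega> (q + 1) 0 m else 0)"
  proof (rule sum.cong[OF refl])
    fix i
    show "(\<Sum>j<n. if j + i < n then \<kappa> i (j + i) * B (j + i) * Mc n \<omega> (j + i + 1) 0 m else 0) =
        (\<Sum>q<n. if i \<le> q then \<kappa> i q * B q * Mc n \<omega> (q + 1) 0 m else 0)"
      using reindex_tri[where g="\<lambda>q. \<kappa> i q * B q * Mc n \<omega> (q + 1) 0 m" and n=n and i=i] by simp
  qed
  also have "\<dots> = (\<Sum>q<n. \<Sum>i<n. if i \<le> q then \<kappa> i q * B q * Mc n \<omega> (q + 1) 0 m else 0)"
    by (rule sum.swap)
  also have "\<dots> = (\<Sum>q<n. (\<Sum>i<n. if i \<le> q then \<kappa> i q else 0) * (B q * Mc n \<omega> (q + 1) 0 m))"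
    unfolding sum_distrib_right by (intro sum.cong refl) (simp add: mult.assoc)
  also have "\<dots> = (\<Sum>q<n. B q * Mc n \<omega> 1 q m)"
  proof (intro sum.cong refl)
    fix q assume "q \<in> {..<n}"
    then have "(\<Sum>i<n. if i \<le> q then \<kappa> i q else 0) = 1"
      using kappa_sum[OF w, of q] unfolding \<kappa>_def r_def by simp
    then show "(\<Sum>i<n. if i \<le> q then \<kappa> i q else 0) * (B q * Mc n \<omega> (q + 1) 0 m) = B q * Mc n \<omega> 1 q m"
      by (simp add: Mc_def add.commute)
  qed
  also have "\<dots> = mulA n \<omega> (uA 1) B m"
    by (simp add: mulA_uA_left[OF n0 n1])
  finally show "Phi n \<omega> (rho_u n \<omega>) B m = mulA n \<omega> (uA 1) B m" .
qed

theorem corollary5p6: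
  fixes n :: nat and \<omega> :: "'k::field_char_0" and a b :: "nat \<Rightarrow> 'k"
  assumes "2 \<le> n"
    and "primitive_root_of_unity n \<omega>"
    and "\<forall>k\<ge>n. a k = 0" and "\<forall>k\<ge>n. b k = 0"
  shows "mulA n \<omega> a b =
    (\<lambda>m. \<Sum>c<n. \<Sum>e<n. \<Sum>k<n.
       rhoA n \<omega> a c e k * mulA n \<omega> (actH n \<omega> (basisH c e) b) (uA k) m)"
proof -
  have n0: "0 < n" using assms by simp
  have w: "\<omega> ^ n = 1" using assms(2) by (simp add: primitive_root_of_unity_def)
  have sb: "supp n b" using assms(4) by (simp add: supp_def)
  define P where "P p = (mulHA n \<omega> (rho_u n \<omega>) ^^ p) unitHA" for p
  have PP: "Phi n \<omega> (P p) b = (mulA n \<omega> (uA 1) ^^ p) b" for p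
  proof (induction p)
    case 0 then show ?case using Phi_unit[OF assms(1) sb] by (simp add: P_def)
  next
    case (Suc p)
    have "Phi n \<omega> (P (Suc p)) b = mulA n \<omega> (uA 1) (Phi n \<omega> (P p) b)"
      unfolding P_def funpow.simps comp_def
      by (rule Phi_step[OF assms(1) w sb Phi_base[OF assms(1,2)]])
    then show ?case using Suc by simp
  qed
  have "rhoA n \<omega> a = (\<lambda>c e k. \<Sum>p<n. a p * P p c e k)"
    unfolding rhoA_def P_def by (rule refl)
  have PP': "(\<Sum>c<n. \<Sum>e<n. \<Sum>k<n. P p c e k * mulA n \<omega> (actH n \<omega> (basisH c e) b) (uA k) m)
      = mulA n \<omega> (uA p) b m" if "p < n" for p m
    using fun_cong[OF PP[of p, unfolded Phi_def], of m] mulA_u1_iter[OF assms(1) sb that] by simp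
  have RR: "(\<lambda>m. \<Sum>c<n. \<Sum>e<n. \<Sum>k<n.
       rhoA n \<omega> a c e k * mulA n \<omega> (actH n \<omega> (basisH c e) b) (uA k) m)
     = (\<lambda>m. \<Sum>p<n. a p * mulA n \<omega> (uA p) b m)"
  proof
    fix m
    have "(\<Sum>c<n. \<Sum>e<n. \<Sum>k<n.
       rhoA n \<omega> a c e k * mulA n \<omega> (actH n \<omega> (basisH c e) b) (uA k) m)
      = (\<Sum>p<n. a p * (\<Sum>c<n. \<Sum>e<n. \<Sum>k<n. P p c e k * mulA n \<omega> (actH n \<omega> (basisH c e) b) (uA k) m))"
      using Phi_lin[of n \<omega> a P b m] unfolding Phi_def \<open>rhoA n \<omega> a = _\<close> .
    also have "\<dots> = (\<Sum>p<n. a p * mulA n \<omega> (uA p) b m)"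
      by (intro sum.cong refl) (simp add: PP')
    finally show "(\<Sum>c<n. \<Sum>e<n. \<Sum>k<n.
       rhoA n \<omega> a c e k * mulA n \<omega> (actH n \<omega> (basisH c e) b) (uA k) m)
      = (\<Sum>p<n. a p * mulA n \<omega> (uA p) b m)" .
  qed
  note RR
  also have "\<dots> = (\<lambda>m. \<Sum>p<n. a p * (\<Sum>j<n. b j * Mc n \<omega> p j m))"
    by (intro ext sum.cong refl) (simp add: mulA_uA_left[OF n0])
  also have "\<dots> = mulA n \<omega> a b"
    unfolding mulA_Mc[OF n0] by (simp add: sum_distrib_left mult.assoc)
  finally show ?thesis by simp
qed

end
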